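(* Let $m\ge n$, $B\in\mathbb R^{n\times m}$ of full row rank, $f,h$ convex and continuously differentiable with Lipschitz gradients, $\mathcal L(u,p)=f(u)-h(p)+(Bu,p)$ with saddle point $(u^*,p^* )$, and $T_{\mathcal U},\mathcal I_{\mathcal V}$ ($m\times m$), $T_{\mathcal P},\mathcal I_{\mathcal Q}$ ($n\times n$) symmetric positive definite. Suppose $h\in\mathcal S^{1,1}_{\mu_{h,T_{\mathcal P}},L_{h,T_{\mathcal P}}}$ w.r.t. $T_{\mathcal P}$ with $L_{h,T_{\mathcal P}}\le1$, $f\in\mathcal S^{1,1}_{\mu_{f,T_{\mathcal U}},L_{f,T_{\mathcal U}}}$ w.r.t. $T_{\mathcal U}$ with $L_{f,T_{\mathcal U}}\le1$, $f_B$ is strongly convex w.r.t. $\mathcal I_{\mathcal V}$ with $\mu_{f_B,\mathcal I_{\mathcal V}}>0$, and $h_B$ is strongly convex w.r.t. $\mathcal I_{\mathcal Q}$ with $\mu_{h_B,\mathcal I_{\mathcal Q}}>0$. Let $(u_k,p_k)$ be generated from $(u_0,p_0)$ by $$u_{k+1/2}=u_k-T_{\mathcal U}^{-1}(\nabla f(u_k)+B^\top p_k),\quad p_{k+1/2}=p_k-T_{\mathcal P}^{-1}(\nabla h(p_k)-Bu_k),$$ $$u_{k+1}=u_k-\alpha_k\mathcal I_{\mathcal V}^{-1}(\nabla f(u_k)+B^\top p_{k+1/2}),\quad p_{k+1}=p_k-\alpha_k\mathcal I_{\mathcal Q}^{-1}(\nabla h(p_k)-Bu_{k+1/2})$$ (equivalently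 $u_{k+1}=u_k+\alpha_k\mathcal G^u(u_k,p_k)$, $p_{k+1}=p_k+\alpha_k\mathcal G^p(u_k,p_k)$). Then $$\mathcal E(u_{k+1},p_{k+1})\le(1-\delta_k)\mathcal E(u_k,p_k)$$ for $0<\alpha_k<\min\{\mu_{f_B,\mathcal I_{\mathcal V}}/L_{\mathcal V}^2,\ \mu_{h_B,\mathcal I_{\mathcal Q}}/L_{\mathcal Q}^2\}$, where $\delta_k=\min\{\alpha_k(\mu_{f_B,\mathcal I_{\mathcal V}}-L_{\mathcal V}^2\alpha_k),\ \alpha_k(\mu_{h_B,\mathcal I_{\mathcal Q}}-L_{\mathcal Q}^2\alpha_k)\}$ satisfies $0<\delta_k<1$, with $$L_{\mathcal V}^2=2(L_{f_B,\mathcal I_{\mathcal V}}^2+L_S^2L_{e_{\mathcal U},\mathcal I_{\mathcal V}}^2),\qquad L_{\mathcal Q}^2=2(L_{h_B,\mathcal I_{\mathcal Q}}^2+L_S^2L_{e_{\mathcal P},\mathcal I_{\mathcal Q}}^2).$$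
   Context: $\partial_u\mathcal L=\nabla f(u)+B^\top p$, $\partial_p\mathcal L=Bu-\nabla h(p)$; a saddle point satisfies $\nabla\mathcal L(u^*,p^* )=0$. For SPD $M$, $\|x\|_M=(Mx,x)^{1/2}$; $D_g(y,x)=g(y)-g(x)-(\nabla g(x),y-x)$; $g\in\mathcal S^{1,1}_{\mu_{g,M},L_{g,M}}$ w.r.t. $M$ means $\frac{\mu_{g,M}}2\|x-y\|_M^2\le D_g(y,x)\le\frac{L_{g,M}}2\|x-y\|_M^2$ for all $x,y$. Define $f_B(u)=f(u)+\frac12(B^\top T_{\mathcal P}^{-1}Bu,u)$, $h_B(p)=h(p)+\frac12(BT_{\mathcal U}^{-1}B^\top p,p)$, $e_{\mathcal U}(u)=u-T_{\mathcal U}^{-1}\nabla f(u)$, $e_{\mathcal P}(p)=p-T_{\mathcal P}^{-1}\nabla h(p)$, $\mathcal G^u(u,p)=-\mathcal I_{\mathcal V}^{-1}(\partial_u\mathcal L+B^\top T_{\mathcal P}^{-1}\partial_p\mathcal L)$, $\mathcal G^p(u,p)=\mathcal I_{\mathcal Q}^{-1}(\partial_p\mathcal L-BT_{\mathcal U}^{-1}\partial_u\mathcal L)$, and $\mathcal E(u,p)=\frac12\|u-u^*\|^2_{\mathcal I_{\mathcal V}}+\frac12\|p-p^*\|^2_{\mathcal I_{\mathcal Q}}$. $L_{f_B,\mathcal I_{\mathcal V}}$, $L_{h_B,\mathcal I_{\mathcal Q}}$ are the Lipschitz constants of $\nabla f_B,\nabla h_B$ (in the sense $\|\nabla f_B(u_1)-\nabla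 f_B(u_2)\|_{\mathcal I_{\mathcal V}^{-1}}\le L_{f_B,\mathcal I_{\mathcal V}}\|u_1-u_2\|_{\mathcal I_{\mathcal V}}$, similarly for $h_B$ with $\mathcal I_{\mathcal Q}$); $L_{e_{\mathcal U},\mathcal I_{\mathcal V}}$, $L_{e_{\mathcal P},\mathcal I_{\mathcal Q}}$ are the Lipschitz constants of $e_{\mathcal U}$ in $\|\cdot\|_{\mathcal I_{\mathcal V}}$ and of $e_{\mathcal P}$ in $\|\cdot\|_{\mathcal I_{\mathcal Q}}$; $L_S^2=\lambda_{\max}(\mathcal I_{\mathcal Q}^{-1}B\mathcal I_{\mathcal V}^{-1}B^\top)$. *)

theory Defs
  imports "HOL-Analysis.Analysis"
begin

definition spd :: "real^'n^'n \<Rightarrow> bool" where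
  "spd M \<longleftrightarrow> transpose M = M \<and> (\<forall>x. x \<noteq> 0 \<longrightarrow> (M *v x) \<bullet> x > 0)"

definition mnorm :: "real^'n^'n \<Rightarrow> real^'n \<Rightarrow> real" where
  "mnorm M x = sqrt ((M *v x) \<bullet> x)"

definition bregman :: "(real^'n \<Rightarrow> real) \<Rightarrow> (real^'n \<Rightarrow> real^'n) \<Rightarrow> real^'n \<Rightarrow> real^'n \<Rightarrow> real" where
  "bregman g dg y x = g y - g x - dg x \<bullet> (y - x)"

definition S11 :: "(real^'n \<Rightarrow> real) \<Rightarrow> (real^'n \<Rightarrow> real^'n) \<Rightarrow> real \<Rightarrow> real \<Rightarrow> real^'n^'n \<Rightarrow> bool" where
  "S11 g dg mu L M \<longleftrightarrow> (\<forall>x y. mu / 2 * (mnorm M (x - y))\<^sup>2 \<le> bregman g dg y x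
                              \<and> bregman g dg y x \<le> L / 2 * (mnorm M (x - y))\<^sup>2)"

definition strongly_convex_wrt :: "(real^'n \<Rightarrow> real) \<Rightarrow> (real^'n \<Rightarrow> real^'n) \<Rightarrow> real \<Rightarrow> real^'n^'n \<Rightarrow> bool" where
  "strongly_convex_wrt g dg mu M \<longleftrightarrow> (\<forall>x y. mu / 2 * (mnorm M (x - y))\<^sup>2 \<le> bregman g dg y x)"

definition lip_const :: "('a \<Rightarrow> real) \<Rightarrow> ('b \<Rightarrow> real) \<Rightarrow> ('a::real_vector \<Rightarrow> 'b::real_vector) \<Rightarrow> real" where
  "lip_const N1 N2 F = Inf {L. 0 \<le> L \<and> (\<forall>x y. N2 (F x - F y) \<le> L * N1 (x - y))}"

text \<open>Largest eigenvalue of a square real matrix (all its eigenvalues are real here).\<close>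
definition lambda_max :: "real^'n^'n \<Rightarrow> real" where
  "lambda_max A = Max {l. \<exists>v. v \<noteq> 0 \<and> A *v v = l *\<^sub>R v}"

end

theory Submission
  imports Defs
begin



definition qf :: "real^'n^'n \<Rightarrow> real^'n \<Rightarrow> real" where
  "qf M x = (M *v x) \<bullet> x"

lemma adj: "(transpose (A::real^'m^'n) *v y) \<bullet> x = y \<bullet> (A *v x)"
  by (simp add: dot_lmul_matrix)

lemma sym_dot: assumes h: "transpose (M::real^'n^'n) = M" shows "(M *v x) \<bullet> y = (M *v y) \<bullet> x"
proof -
  have "(M *v x) \<bullet> y = x \<bullet> (M *v y)" using adj[of M x y] h by simp
  also have "\<dots> = (M *v y) \<bullet> x" by (rule inner_commute)
  finally show ?thesis .
qed

lemma qf_add: "transpose M = M \<Longrightarrow> qf M (x + y) = qf M x + 2 * ((M *v x) \<bullet> y) + qf M y"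
  unfolding qf_def using sym_dot[of M y x]
  by (simp add: matrix_vector_right_distrib inner_add_left inner_add_right)

lemma qf_diff: "transpose M = M \<Longrightarrow> qf M (x - y) = qf M x - 2 * ((M *v x) \<bullet> y) + qf M y"
  unfolding qf_def using sym_dot[of M y x]
  by (simp add: matrix_vector_mult_diff_distrib inner_diff_left inner_diff_right)

lemma qf_scale: "qf M (c *\<^sub>R x) = c^2 * qf M x"
  unfolding qf_def by (simp add: matrix_vector_mult_scaleR power2_eq_square)

lemma qf_minus: "qf M (- x) = qf M x"
  using qf_scale[of M "-1" x] by simp

lemma spd_sym: "spd M \<Longrightarrow> transpose M = M" by (simp add: spd_def)

lemma spd_nonneg: "0 \<le> qf M x" if "spd M"
proof (cases "x = 0")
  case True then show ?thesis by (simp add: qf_def)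
next
  case False then show ?thesis using that unfolding spd_def qf_def by (auto intro: less_imp_le)
qed

lemma spd_pos: "spd M \<Longrightarrow> x \<noteq> 0 \<Longrightarrow> 0 < qf M x"
  unfolding spd_def qf_def by auto

lemma mnorm_sq: "spd M \<Longrightarrow> (mnorm M x)^2 = qf M x"
  using spd_nonneg[of M x] by (simp add: mnorm_def qf_def[symmetric])

lemma mnorm_nonneg: "spd M \<Longrightarrow> 0 \<le> mnorm M x"
  using spd_nonneg[of M x] by (simp add: mnorm_def qf_def[symmetric])

lemma spd_invertible: assumes "spd M" shows "invertible M"
proof -
  have "\<forall>x. M *v x = 0 \<longrightarrow> x = 0"
    using spd_pos[OF assms] unfolding qf_def by fastforce
  then show ?thesis using matrix_left_invertible_ker invertible_left_inverse by blast
qed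

lemma inv_props: assumes "invertible M"
  shows "M ** matrix_inv M = mat 1" "matrix_inv M ** M = mat 1"
proof -
  have "\<exists>A'. M ** A' = mat 1 \<and> A' ** M = mat 1" using assms unfolding invertible_def by blast
  from someI_ex[OF this] show "M ** matrix_inv M = mat 1" "matrix_inv M ** M = mat 1"
    unfolding matrix_inv_def by auto
qed

lemma spd_inv_l: "spd M \<Longrightarrow> matrix_inv M *v (M *v x) = x"
  by (simp add: matrix_vector_mul_assoc inv_props(2)[OF spd_invertible])
lemma spd_inv_r: "spd M \<Longrightarrow> M *v (matrix_inv M *v x) = x"
  by (simp add: matrix_vector_mul_assoc inv_props(1)[OF spd_invertible])

lemma spd_inv_spd: assumes "spd M" shows "spd (matrix_inv M)"
proof -
  let ?I = "matrix_inv M"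
  have sM: "transpose M = M" using assms by (simp add: spd_def)
  have i1: "M ** ?I = mat 1" by (rule inv_props(1)[OF spd_invertible[OF assms]])
  have "transpose ?I ** M = transpose ?I ** transpose M" using sM by simp
  also have "\<dots> = transpose (M ** ?I)" by (simp add: matrix_transpose_mul)
  also have "\<dots> = mat 1" using i1 by simp
  finally have i2: "transpose ?I ** M = mat 1" .
  have "transpose ?I = transpose ?I ** (M ** ?I)" using i1 by simp
  also have "\<dots> = (transpose ?I ** M) ** ?I" by (simp add: matrix_mul_assoc)
  also have "\<dots> = ?I" using i2 by simp
  finally have "transpose ?I = ?I" .
  moreover have "(?I *v x) \<bullet> x > 0" if "x \<noteq> 0" for x
  proof -
    let ?y = "?I *v x"
    have "?y \<noteq> 0" using that spd_inv_r[OF assms, of x] by auto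
    then have "0 < (M *v ?y) \<bullet> ?y" using spd_pos[OF assms] unfolding qf_def by auto
    then show ?thesis by (simp add: spd_inv_r[OF assms] inner_commute)
  qed
  ultimately show ?thesis unfolding spd_def by auto
qed

lemma qf_inv: assumes "spd M" shows "qf (matrix_inv M) (M *v z) = qf M z"
  unfolding qf_def using assms by (simp add: spd_inv_l inner_commute)

lemma cs_qf: assumes "spd M" shows "((M *v z) \<bullet> y)^2 \<le> qf M z * qf M y"
proof (cases "y = 0")
  case True then show ?thesis by (simp add: qf_def)
next
  case False
  have sM: "transpose M = M" using assms by (simp add: spd_def)
  let ?t = "((M *v z) \<bullet> y) / qf M y"
  have py: "qf M y > 0" using spd_pos[OF assms False] .
  have "0 \<le> qf M (z - ?t *\<^sub>R y)" by (rule spd_nonneg[OF assms])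
  also have "\<dots> = qf M z - 2 * ?t * ((M *v z) \<bullet> y) + ?t^2 * qf M y"
    using qf_diff[OF sM, of z "?t *\<^sub>R y"] by (simp add: qf_scale inner_scaleR_right)
  also have "\<dots> = qf M z - ((M *v z) \<bullet> y)^2 / qf M y"
    using py by (simp add: power2_eq_square field_simps)
  finally have "((M *v z) \<bullet> y)^2 / qf M y \<le> qf M z" by simp
  then show ?thesis using py by (simp add: divide_le_eq mult.commute)
qed

lemma cs_gen: assumes "spd M" shows "(g \<bullet> d)^2 \<le> qf (matrix_inv M) g * qf M d"
proof -
  let ?z = "matrix_inv M *v g"
  have g: "g = M *v ?z" using spd_inv_r[OF assms] by simp
  have "(g \<bullet> d)^2 = ((M *v ?z) \<bullet> d)^2" using g by simp
  also have "\<dots> \<le> qf M ?z * qf M d" by (rule cs_qf[OF assms])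
  also have "qf M ?z = qf (matrix_inv M) g" using qf_inv[OF assms, of ?z] g by simp
  finally show ?thesis .
qed

lemma parallelogram: assumes "spd M" shows "qf M (x + y) \<le> 2 * qf M x + 2 * qf M y"
proof -
  have sM: "transpose M = M" using assms by (simp add: spd_def)
  have "0 \<le> qf M (x - y)" by (rule spd_nonneg[OF assms])
  then show ?thesis using qf_add[OF sM, of x y] qf_diff[OF sM, of x y] by linarith
qed



lemma qf_cont: "continuous_on A (qf M)"
  unfolding qf_def
  by (intro continuous_intros linear_continuous_on bounded_linear.linear matrix_vector_mul_bounded_linear)

lemma qf_upper: "\<exists>C>0. \<forall>x. qf M x \<le> C * (norm x)^2"
proof -
  obtain K where K: "K > 0" "\<And>x. norm (M *v x) \<le> norm x * K"
    using bounded_linear.pos_bounded[OF matrix_vector_mul_bounded_linear[of M]] by blast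
  have "qf M x \<le> K * (norm x)^2" for x
  proof -
    have "qf M x \<le> norm (M *v x) * norm x" unfolding qf_def by (rule norm_cauchy_schwarz)
    also have "\<dots> \<le> (norm x * K) * norm x" by (rule mult_right_mono[OF K(2)]) simp
    finally show ?thesis by (simp add: power2_eq_square mult_ac)
  qed
  then show ?thesis using K by blast
qed

lemma qf_lower: assumes "spd M" shows "\<exists>c>0. \<forall>x. c * (norm x)^2 \<le> qf M x"
proof -
  have ne: "sphere (0::real^'n) 1 \<noteq> {}" by simp
  obtain x0 where x0: "x0 \<in> sphere 0 1" "\<And>y. y \<in> sphere 0 1 \<Longrightarrow> qf M x0 \<le> qf M y"
    using continuous_attains_inf[OF compact_sphere ne qf_cont] by blast
  have "x0 \<noteq> 0" using x0(1) by auto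
  then have pos: "qf M x0 > 0" using spd_pos[OF assms] by blast
  have "qf M x0 * (norm x)^2 \<le> qf M x" for x
  proof (cases "x = 0")
    case True then show ?thesis by (simp add: qf_def)
  next
    case False
    let ?y = "(1 / norm x) *\<^sub>R x"
    have "?y \<in> sphere 0 1" using False by simp
    then have "qf M x0 \<le> qf M ?y" by (rule x0(2))
    also have "qf M ?y = qf M x / (norm x)^2" by (simp add: qf_scale power_divide)
    finally show ?thesis using False by (simp add: le_divide_eq)
  qed
  then show ?thesis using pos by blast
qed

lemma lip_transfer:
  assumes "spd M1" "spd M2" "\<And>x y. norm (F x - F y) \<le> K * norm (x - y)"
  shows "\<exists>L\<ge>0. \<forall>x y. mnorm M2 (F x - F y) \<le> L * mnorm M1 (x - y)"
proof -
  obtain c where c: "c > 0" "\<And>x. c * (norm x)^2 \<le> qf M1 x" using qf_lower[OF assms(1)] by blast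
  obtain C where C: "C > 0" "\<And>x. qf M2 x \<le> C * (norm x)^2" using qf_upper by blast
  define K' where "K' = max K 0"
  have K': "K' \<ge> 0" "\<And>x y. norm (F x - F y) \<le> K' * norm (x - y)"
    unfolding K'_def using assms(3)
    by (auto intro: order_trans[OF _ mult_right_mono[of K "max K 0"]])
  have up: "mnorm M2 v \<le> sqrt C * norm v" for v
  proof -
    have "mnorm M2 v = sqrt (qf M2 v)" by (simp add: mnorm_def qf_def)
    also have "\<dots> \<le> sqrt (C * (norm v)^2)" using C(2) by (rule real_sqrt_le_mono)
    also have "\<dots> = sqrt C * norm v" by (simp add: real_sqrt_mult)
    finally show ?thesis .
  qed
  have lo: "sqrt c * norm w \<le> mnorm M1 w" for w
  proof -
    have "sqrt c * norm w = sqrt (c * (norm w)^2)" by (simp add: real_sqrt_mult)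
    also have "\<dots> \<le> sqrt (qf M1 w)" using c(2) by (rule real_sqrt_le_mono)
    also have "\<dots> = mnorm M1 w" by (simp add: mnorm_def qf_def)
    finally show ?thesis .
  qed
  have "mnorm M2 (F x - F y) \<le> (sqrt C * K' / sqrt c) * mnorm M1 (x - y)" for x y
  proof -
    have "mnorm M2 (F x - F y) \<le> sqrt C * norm (F x - F y)" by (rule up)
    also have "\<dots> \<le> sqrt C * (K' * norm (x - y))" using K'(2)[of x y] C(1) by (intro mult_left_mono) auto
    also have "norm (x - y) \<le> mnorm M1 (x - y) / sqrt c" using lo[of "x - y"] c(1) by (simp add: le_divide_eq mult.commute)
    then have "sqrt C * (K' * norm (x - y)) \<le> sqrt C * (K' * (mnorm M1 (x - y) / sqrt c))"
      using K'(1) C(1) by (intro mult_left_mono) auto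
    finally show ?thesis by simp
  qed
  moreover have "sqrt C * K' / sqrt c \<ge> 0" using K'(1) C(1) c(1) by simp
  ultimately show ?thesis by blast
qed

lemma lip_const_props:
  assumes ex: "\<exists>L\<ge>0. \<forall>x y. N2 (F x - F y) \<le> L * N1 (x - y)" and nn: "\<And>x. 0 \<le> N1 x"
  shows "N2 (F x - F y) \<le> lip_const N1 N2 F * N1 (x - y)" "0 \<le> lip_const N1 N2 F"
proof -
  let ?S = "{L. 0 \<le> L \<and> (\<forall>x y. N2 (F x - F y) \<le> L * N1 (x - y))}"
  have ne: "?S \<noteq> {}" using ex by blast
  have bdd: "bdd_below ?S" by (rule bdd_belowI[of _ 0]) auto
  show "0 \<le> lip_const N1 N2 F" unfolding lip_const_def by (rule cInf_greatest[OF ne]) auto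
  show "N2 (F x - F y) \<le> lip_const N1 N2 F * N1 (x - y)"
  proof (cases "N1 (x - y) = 0")
    case True
    obtain L where "L \<in> ?S" using ne by blast
    then have "N2 (F x - F y) \<le> L * N1 (x - y)" by blast
    then show ?thesis using True by simp
  next
    case False
    then have pos: "N1 (x - y) > 0" using nn[of "x - y"] by linarith
    have "N2 (F x - F y) / N1 (x - y) \<le> lip_const N1 N2 F" unfolding lip_const_def
    proof (rule cInf_greatest[OF ne])
      fix L assume "L \<in> ?S"
      then have "N2 (F x - F y) \<le> L * N1 (x - y)" by blast
      then show "N2 (F x - F y) / N1 (x - y) \<le> L" using pos by (simp add: divide_le_eq)
    qed
    then show ?thesis using pos by (simp add: divide_le_eq)
  qed
qed



lemma convex_tangent:
  fixes f :: "real^'n \<Rightarrow> real"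
  assumes cv: "convex_on UNIV f" and d: "(f has_derivative (\<lambda>d. g \<bullet> d)) (at x)"
  shows "f x + g \<bullet> (y - x) \<le> f y"
proof -
  define \<phi> where "\<phi> t = f (x + t *\<^sub>R (y - x))" for t :: real
  have cphi: "convex_on UNIV \<phi>"
  proof (rule convex_onI)
    fix t a b :: real assume t: "0 < t" "t < 1"
    have e: "x + ((1-t) *\<^sub>R a + t *\<^sub>R b) *\<^sub>R (y-x) = (1-t) *\<^sub>R (x + a *\<^sub>R (y-x)) + t *\<^sub>R (x + b *\<^sub>R (y-x))"
      by (simp add: algebra_simps)
    show "\<phi> ((1-t) *\<^sub>R a + t *\<^sub>R b) \<le> (1-t) * \<phi> a + t * \<phi> b"
      unfolding \<phi>_def e using convex_onD[OF cv, of t] t by simp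
  qed simp
  have l: "((\<lambda>t. x + t *\<^sub>R (y-x)) has_derivative (\<lambda>t. t *\<^sub>R (y-x))) (at (0::real))"
    by (auto intro!: derivative_eq_intros)
  have d0: "(f has_derivative (\<lambda>d. g \<bullet> d)) (at (x + 0 *\<^sub>R (y - x)))" using d by simp
  have "(\<phi> has_derivative (\<lambda>t. g \<bullet> (t *\<^sub>R (y-x)))) (at 0)"
    using has_derivative_compose[OF l d0] unfolding \<phi>_def by simp
  moreover have "(\<lambda>t. g \<bullet> (t *\<^sub>R (y-x))) = (*) (g \<bullet> (y - x))"
    by (auto simp: mult.commute)
  ultimately have "(\<phi> has_field_derivative (g \<bullet> (y - x))) (at 0 within UNIV)"
    unfolding has_field_derivative_def by simp
  from convex_on_imp_above_tangent[OF cphi _ _ _ this, of 1]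
  have "\<phi> 1 - \<phi> 0 \<ge> g \<bullet> (y - x) * (1 - 0)" by simp
  then show ?thesis unfolding \<phi>_def by simp
qed

lemma half_cocoercive:
  fixes f :: "real^'n \<Rightarrow> real"
  assumes cv: "convex_on UNIV f" and d: "\<And>x. (f has_derivative (\<lambda>d. gf x \<bullet> d)) (at x)"
    and T: "spd T" and up: "\<And>x y. bregman f gf y x \<le> L/2 * (mnorm T (x-y))^2" and L: "L \<le> 1"
  shows "1/2 * qf (matrix_inv T) (gf y - gf x) \<le> bregman f gf y x"
proof -
  let ?Ti = "matrix_inv T"
  define g where "g = gf y - gf x"
  define z where "z = y - ?Ti *v g"
  have tan: "f x + gf x \<bullet> (z - x) \<le> f z" by (rule convex_tangent[OF cv d])
  have qq: "qf T (y - z) = qf ?Ti g"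
    unfolding z_def qf_def by (simp add: spd_inv_r[OF T] inner_commute)
  have "f z - f y - gf y \<bullet> (z - y) \<le> L/2 * (mnorm T (y - z))^2"
    using up[where x=y and y=z] unfolding bregman_def .
  also have "\<dots> = L/2 * qf ?Ti g" using mnorm_sq[OF T] qq by simp
  also have "\<dots> \<le> 1/2 * qf ?Ti g"
    using spd_nonneg[OF spd_inv_spd[OF T], of g] L by (intro mult_right_mono) auto
  finally have uz: "f z - f y - gf y \<bullet> (z - y) \<le> 1/2 * qf ?Ti g" .
  have qg: "qf ?Ti g = g \<bullet> (?Ti *v g)" unfolding qf_def by (simp add: inner_commute)
  have e1: "gf x \<bullet> (z - x) = gf x \<bullet> (y - x) - gf x \<bullet> (?Ti *v g)"
    unfolding z_def by (simp add: inner_diff_right)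
  have e2: "gf y \<bullet> (z - y) = - (gf y \<bullet> (?Ti *v g))" unfolding z_def by (simp add: inner_diff_right)
  have e3: "g \<bullet> (?Ti *v g) = gf y \<bullet> (?Ti *v g) - gf x \<bullet> (?Ti *v g)"
    unfolding g_def by (simp add: inner_diff_left)
  show ?thesis unfolding bregman_def g_def[symmetric] using tan uz qg e1 e2 e3 by linarith
qed

lemma cocoercive:
  fixes f :: "real^'n \<Rightarrow> real"
  assumes cv: "convex_on UNIV f" and d: "\<And>x. (f has_derivative (\<lambda>d. gf x \<bullet> d)) (at x)"
    and T: "spd T" and up: "\<And>x y. bregman f gf y x \<le> L/2 * (mnorm T (x-y))^2" and L: "L \<le> 1"
  shows "qf (matrix_inv T) (gf x - gf y) \<le> (gf x - gf y) \<bullet> (x - y)"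
proof -
  have a: "1/2 * qf (matrix_inv T) (gf y - gf x) \<le> bregman f gf y x"
    by (rule half_cocoercive[OF cv d T up L])
  have b: "1/2 * qf (matrix_inv T) (gf x - gf y) \<le> bregman f gf x y"
    by (rule half_cocoercive[OF cv d T up L])
  have m: "qf (matrix_inv T) (gf y - gf x) = qf (matrix_inv T) (gf x - gf y)"
    using qf_minus[of "matrix_inv T" "gf x - gf y"] by simp
  have s: "bregman f gf y x + bregman f gf x y = (gf x - gf y) \<bullet> (x - y)"
    unfolding bregman_def by (simp add: inner_diff_left inner_diff_right)
  show ?thesis using a b m s by linarith
qed

lemma sc_mono:
  assumes "strongly_convex_wrt g dg mu M" "spd M"
  shows "mu * qf M (x - y) \<le> (dg x - dg y) \<bullet> (x - y)"
proof -
  have a: "mu/2 * (mnorm M (x - y))^2 \<le> bregman g dg y x" "mu/2 * (mnorm M (y - x))^2 \<le> bregman g dg x y"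
    using assms(1) unfolding strongly_convex_wrt_def by blast+
  have m: "qf M (y - x) = qf M (x - y)" using qf_minus[of M "x - y"] by simp
  have s: "bregman g dg y x + bregman g dg x y = (dg x - dg y) \<bullet> (x - y)"
    unfolding bregman_def by (simp add: inner_diff_left inner_diff_right)
  show ?thesis using a m s mnorm_sq[OF assms(2)] by simp
qed



lemma eig_span_invariant:
  fixes A :: "real^'n^'n"
  assumes ev: "\<And>v. v \<in> T \<Longrightarrow> \<exists>l. A *v v = l *\<^sub>R v" and y: "y \<in> span T"
  shows "A *v y \<in> span T"
  using y
proof (induction rule: span_induct_alt)
  case base then show ?case by (simp add: span_zero)
next
  case (step c x y)
  obtain l where "A *v x = l *\<^sub>R x" using ev step(1) by blast
  then have "A *v (c *\<^sub>R x + y) = (c * l) *\<^sub>R x + A *v y"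
    by (simp add: matrix_vector_right_distrib matrix_vector_mult_scaleR)
  then show ?case using step by (simp add: span_add span_scale span_base)
qed

lemma eig_finite:
  fixes A :: "real^'n^'n"
  shows "finite {l. \<exists>v. v \<noteq> 0 \<and> A *v v = l *\<^sub>R v}"
proof -
  let ?S = "{l. \<exists>v. v \<noteq> 0 \<and> A *v v = l *\<^sub>R v}"
  define ev where "ev l = (SOME v. v \<noteq> 0 \<and> A *v v = l *\<^sub>R v)" for l
  have evp: "ev l \<noteq> 0 \<and> A *v ev l = l *\<^sub>R ev l" if "l \<in> ?S" for l
    using someI_ex[of "\<lambda>v. v \<noteq> 0 \<and> A *v v = l *\<^sub>R v"] that unfolding ev_def by auto
  have claim: "\<forall>x \<in> span (ev ` L). \<forall>l. l \<notin> L \<longrightarrow> A *v x = l *\<^sub>R x \<longrightarrow> x = 0"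
    if "finite L" "L \<subseteq> ?S" for L
    using that
  proof (induction L rule: finite_induct)
    case empty then show ?case by simp
  next
    case (insert m L)
    show ?case
    proof (intro ballI allI impI)
      fix x l assume x: "x \<in> span (ev ` insert m L)" and l: "l \<notin> insert m L" and ax: "A *v x = l *\<^sub>R x"
      have mS: "m \<in> ?S" using insert by auto
      have evm: "A *v ev m = m *\<^sub>R ev m" using evp[OF mS] by blast
      from x obtain k where y: "x - k *\<^sub>R ev m \<in> span (ev ` L)"
        using span_breakdown_eq by (metis image_insert)
      define y' where "y' = x - k *\<^sub>R ev m"
      have inv: "\<exists>l. A *v v = l *\<^sub>R v" if "v \<in> ev ` L" for v
        using that insert(4) evp by blast
      have Ay: "A *v y' \<in> span (ev ` L)" using eig_span_invariant[OF inv] y unfolding y'_def by blast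
      define x' where "x' = A *v y' - m *\<^sub>R y'"
      have x'sp: "x' \<in> span (ev ` L)" unfolding x'_def using Ay y y'_def
        by (simp add: span_diff span_scale)
      have x'eq: "x' = (l - m) *\<^sub>R x"
        unfolding x'_def y'_def using ax evm
        by (simp add: matrix_vector_mult_diff_distrib matrix_vector_mult_scaleR algebra_simps)
      have "A *v x' = l *\<^sub>R x'" unfolding x'eq using ax
        by (simp add: matrix_vector_mult_scaleR)
      then have "x' = 0" using insert.IH insert(4) l x'sp by auto
      moreover have "l \<noteq> m" using l by auto
      ultimately show "x = 0" using x'eq by simp
    qed
  qed
  have indep: "independent (ev ` L)" if "finite L" "L \<subseteq> ?S" for L
    using that
  proof (induction L rule: finite_induct)
    case empty then show ?case using independent_empty by simp
  next
    case (insert m L)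
    have mS: "m \<in> ?S" using insert by auto
    have "ev m \<notin> span (ev ` L)"
      using claim[OF insert(1)] insert(2,4) evp[OF mS] by blast
    then show ?case using insert by (simp add: independent_insertI)
  qed
  have inj: "inj_on ev ?S"
  proof (rule inj_onI)
    fix a b assume a: "a \<in> ?S" and b: "b \<in> ?S" and e: "ev a = ev b"
    have "a *\<^sub>R ev a = b *\<^sub>R ev a" using evp[OF a] evp[OF b] e by metis
    then show "a = b" using evp[OF a] by simp
  qed
  show ?thesis
  proof (rule ccontr)
    assume "infinite ?S"
    then obtain L where L: "finite L" "L \<subseteq> ?S" "card L = Suc CARD('n)"
      using infinite_arbitrarily_large by blast
    have "card (ev ` L) \<le> DIM(real^'n)" using independent_bound[OF indep[OF L(1,2)]] by blast
    moreover have "card (ev ` L) = card L" using card_image inj_on_subset[OF inj L(2)] by blast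
    ultimately show False using L(3) by simp
  qed
qed

lemma rayleigh:
  fixes M Q :: "real^'n^'n"
  assumes sM: "transpose M = M" and Q: "spd Q"
  shows "\<exists>l b0. b0 \<noteq> 0 \<and> M *v b0 = l *\<^sub>R (Q *v b0) \<and> (\<forall>b. qf M b \<le> l * qf Q b)"
proof -
  let ?R = "\<lambda>b. qf M b / qf Q b"
  have ne: "sphere (0::real^'n) 1 \<noteq> {}" by simp
  have cont: "continuous_on (sphere 0 1) ?R"
  proof (rule continuous_on_divide[OF qf_cont qf_cont])
    show "\<forall>x\<in>sphere 0 1. qf Q x \<noteq> 0"
    proof
      fix x :: "real^'n" assume "x \<in> sphere 0 1"
      then have "x \<noteq> 0" by auto
      then show "qf Q x \<noteq> 0" using spd_pos[OF Q, of x] by simp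
    qed
  qed
  obtain b0 where b0: "b0 \<in> sphere 0 1" "\<And>y. y \<in> sphere 0 1 \<Longrightarrow> ?R y \<le> ?R b0"
    using continuous_attains_sup[OF compact_sphere ne cont] by blast
  define l where "l = ?R b0"
  have b0nz: "b0 \<noteq> 0" using b0(1) by auto
  have qb0: "qf Q b0 > 0" using spd_pos[OF Q b0nz] .
  have le: "qf M b \<le> l * qf Q b" for b
  proof (cases "b = 0")
    case True then show ?thesis by (simp add: qf_def)
  next
    case False
    let ?y = "(1 / norm b) *\<^sub>R b"
    have "?y \<in> sphere 0 1" using False by simp
    then have "?R ?y \<le> l" using b0(2) l_def by blast
    moreover have "?R ?y = ?R b" using False by (simp add: qf_scale)
    ultimately have "?R b \<le> l" by simp
    moreover have "qf Q b > 0" using spd_pos[OF Q False] .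
    ultimately show ?thesis by (simp add: divide_le_eq)
  qed
  have eqb0: "qf M b0 = l * qf Q b0" using qb0 unfolding l_def by simp
  define w where "w = M *v b0 - l *\<^sub>R (Q *v b0)"
  have "w = 0"
  proof (rule ccontr)
    assume "w \<noteq> 0"
    then have c: "w \<bullet> w > 0" by simp
    define K where "K = qf M w - l * qf Q w"
    have sQ: "transpose Q = Q" using Q by (simp add: spd_def)
    have g: "qf M (b0 + t *\<^sub>R w) - l * qf Q (b0 + t *\<^sub>R w) = 2 * t * (w \<bullet> w) + t^2 * K" for t
    proof -
      have "w \<bullet> w = (M *v b0 - l *\<^sub>R (Q *v b0)) \<bullet> w" using w_def by simp
      also have "\<dots> = (M *v b0) \<bullet> w - l * ((Q *v b0) \<bullet> w)" by (simp add: inner_diff_left)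
      finally have ww: "w \<bullet> w = (M *v b0) \<bullet> w - l * ((Q *v b0) \<bullet> w)" .
      then have ww': "(M *v b0) \<bullet> w = w \<bullet> w + l * ((Q *v b0) \<bullet> w)" by simp
      show ?thesis
        unfolding qf_add[OF sM] qf_add[OF sQ] K_def
        using eqb0 by (simp add: qf_scale inner_scaleR_right algebra_simps ww')
    qed
    define s where "s = (w \<bullet> w) / (\<bar>K\<bar> + 1)"
    have s: "s > 0" unfolding s_def using c by (simp add: add_pos_nonneg)
    have "2 * s * (w \<bullet> w) + s^2 * K \<le> 0" using g[of s] le[of "b0 + s *\<^sub>R w"] by linarith
    then have "s * (2 * (w \<bullet> w) + s * K) \<le> 0" by (simp add: power2_eq_square algebra_simps)
    then have h: "2 * (w \<bullet> w) + s * K \<le> 0" using s by (simp add: mult_le_0_iff)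
    have "s * \<bar>K\<bar> \<le> w \<bullet> w" unfolding s_def using c
      by (simp add: divide_le_eq mult.commute mult_left_mono)
    moreover have "- (s * \<bar>K\<bar>) \<le> s * K" using s mult_left_mono[of "- \<bar>K\<bar>" K s] by simp
    ultimately show False using h c by linarith
  qed
  then have "M *v b0 = l *\<^sub>R (Q *v b0)" unfolding w_def by simp
  then show ?thesis using b0nz le by blast
qed



lemma lam_ge: "A *v v = l *\<^sub>R v \<Longrightarrow> v \<noteq> 0 \<Longrightarrow> l \<le> lambda_max A"
  unfolding lambda_max_def by (rule Max_ge[OF eig_finite]) blast

lemma adjB: "(B *v z) \<bullet> b = z \<bullet> (transpose B *v b)" for B :: "real^'m^'n"
  using adj[of "transpose B" z b] by simp

lemma specA:
  fixes B :: "real^'m^'n" and V :: "real^'m^'m" and Q :: "real^'n^'n"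
  assumes V: "spd V" and Q: "spd Q"
  shows "qf (matrix_inv V) (transpose B *v b) \<le> lambda_max (matrix_inv Q ** B ** matrix_inv V ** transpose B) * qf Q b"
    and "0 \<le> lambda_max (matrix_inv Q ** B ** matrix_inv V ** transpose B)"
proof -
  let ?Vi = "matrix_inv V" and ?Qi = "matrix_inv Q"
  let ?M = "B ** ?Vi ** transpose B"
  let ?L = "lambda_max (?Qi ** B ** ?Vi ** transpose B)"
  have sVi: "transpose ?Vi = ?Vi" using spd_inv_spd[OF V] by (simp add: spd_def)
  have sM: "transpose ?M = ?M" by (simp add: matrix_transpose_mul sVi matrix_mul_assoc)
  have qM: "qf ?M x = qf ?Vi (transpose B *v x)" for x
    unfolding qf_def by (simp add: matrix_vector_mul_assoc[symmetric] adjB del: transpose_matrix_vector)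
  obtain l b0 where lb: "b0 \<noteq> 0" "?M *v b0 = l *\<^sub>R (Q *v b0)" "\<And>b. qf ?M b \<le> l * qf Q b"
    using rayleigh[OF sM Q] by blast
  have "(?Qi ** B ** ?Vi ** transpose B) *v b0 = ?Qi *v (?M *v b0)"
    by (simp add: matrix_vector_mul_assoc matrix_mul_assoc del: transpose_matrix_vector)
  also have "\<dots> = l *\<^sub>R b0" using lb(2) by (simp add: matrix_vector_mult_scaleR spd_inv_l[OF Q])
  finally have "l \<le> ?L" using lam_ge lb(1) by blast
  moreover have "0 \<le> l"
  proof -
    have "qf ?M b0 = l * qf Q b0" using lb(2) unfolding qf_def by simp
    moreover have "0 \<le> qf ?M b0" unfolding qM by (rule spd_nonneg[OF spd_inv_spd[OF V]])
    moreover have "0 < qf Q b0" by (rule spd_pos[OF Q lb(1)])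
    ultimately show ?thesis by (simp add: zero_le_mult_iff)
  qed
  ultimately show "0 \<le> ?L" by simp
  have "qf ?M b \<le> l * qf Q b" by (rule lb(3))
  also have "\<dots> \<le> ?L * qf Q b" using \<open>l \<le> ?L\<close> spd_nonneg[OF Q] by (rule mult_right_mono)
  finally show "qf ?Vi (transpose B *v b) \<le> ?L * qf Q b" unfolding qM .
qed

lemma specB:
  fixes B :: "real^'m^'n" and V :: "real^'m^'m" and Q :: "real^'n^'n"
  assumes V: "spd V" and Q: "spd Q"
  shows "qf (matrix_inv Q) (B *v d) \<le> lambda_max (matrix_inv Q ** B ** matrix_inv V ** transpose B) * qf V d"
proof -
  let ?Vi = "matrix_inv V" and ?Qi = "matrix_inv Q"
  let ?N = "transpose B ** ?Qi ** B"
  let ?L = "lambda_max (?Qi ** B ** ?Vi ** transpose B)"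
  have L0: "0 \<le> ?L" by (rule specA(2)[OF V Q])
  have sQi: "transpose ?Qi = ?Qi" using spd_inv_spd[OF Q] by (simp add: spd_def)
  have sN: "transpose ?N = ?N" by (simp add: matrix_transpose_mul sQi matrix_mul_assoc)
  have qN: "qf ?N x = qf ?Qi (B *v x)" for x
    unfolding qf_def by (simp add: matrix_vector_mul_assoc[symmetric] adj del: transpose_matrix_vector)
  obtain l d0 where ld: "d0 \<noteq> 0" "?N *v d0 = l *\<^sub>R (V *v d0)" "\<And>b. qf ?N b \<le> l * qf V b"
    using rayleigh[OF sN V] by blast
  show ?thesis
  proof (cases "l \<le> 0")
    case True
    have "qf ?N d \<le> l * qf V d" by (rule ld(3))
    also have "\<dots> \<le> 0" using True spd_nonneg[OF V] by (simp add: mult_nonpos_nonneg)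
    also have "\<dots> \<le> ?L * qf V d" using L0 spd_nonneg[OF V] by simp
    finally show ?thesis unfolding qN .
  next
    case False
    define w where "w = ?Qi *v (B *v d0)"
    have "(?Qi ** B ** ?Vi ** transpose B) *v w = ?Qi *v (B *v (?Vi *v (?N *v d0)))"
      unfolding w_def by (simp add: matrix_vector_mul_assoc matrix_mul_assoc del: transpose_matrix_vector)
    also have "\<dots> = l *\<^sub>R w" unfolding ld(2) w_def
      by (simp add: matrix_vector_mult_scaleR spd_inv_l[OF V])
    finally have ew: "(?Qi ** B ** ?Vi ** transpose B) *v w = l *\<^sub>R w" .
    have "w \<noteq> 0"
    proof
      assume "w = 0"
      then have "?N *v d0 = 0" unfolding w_def
        by (simp add: matrix_vector_mul_assoc[symmetric] del: transpose_matrix_vector)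
      then have "l *\<^sub>R (V *v d0) = 0" using ld(2) by simp
      then have "V *v d0 = 0" using False by simp
      then have "qf V d0 = 0" by (simp add: qf_def)
      then show False using spd_pos[OF V ld(1)] by simp
    qed
    then have "l \<le> ?L" using lam_ge ew by blast
    have "qf ?N d \<le> l * qf V d" by (rule ld(3))
    also have "\<dots> \<le> ?L * qf V d" using \<open>l \<le> ?L\<close> spd_nonneg[OF V] by (rule mult_right_mono)
    finally show ?thesis unfolding qN .
  qed
qed



lemma mv_neg: "A *v (- x) = - (A *v x)" for A :: "real^'m^'n"
  using matrix_vector_mult_diff_distrib[of A 0 x] by simp

lemma lip_mat: "\<exists>K. \<forall>x y. norm (A *v x - A *v y) \<le> K * norm (x - y)" for A :: "real^'m^'n"
proof -
  obtain K where K: "K > 0" "\<And>x. norm (A *v x) \<le> norm x * K"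
    using bounded_linear.pos_bounded[OF matrix_vector_mul_bounded_linear[of A]] by blast
  have "norm (A *v x - A *v y) \<le> K * norm (x - y)" for x y
    using K(2)[of "x - y"] by (simp add: matrix_vector_mult_diff_distrib mult.commute)
  then show ?thesis by blast
qed

lemma lip_mat_comp:
  fixes A :: "real^'m^'n"
  assumes "\<And>x y. norm (g x - g y) \<le> K * norm (x - y)"
  shows "\<exists>K'. \<forall>x y. norm (A *v g x - A *v g y) \<le> K' * norm (x - y)"
proof -
  obtain KA where K: "KA > 0" "\<And>x. norm (A *v x) \<le> norm x * KA"
    using bounded_linear.pos_bounded[OF matrix_vector_mul_bounded_linear[of A]] by blast
  have "norm (A *v g x - A *v g y) \<le> (K * KA) * norm (x - y)" for x y
  proof -
    have "norm (A *v g x - A *v g y) \<le> norm (g x - g y) * KA"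
      using K(2)[of "g x - g y"] by (simp add: matrix_vector_mult_diff_distrib)
    also have "\<dots> \<le> (K * norm (x - y)) * KA" using assms K(1) by (intro mult_right_mono) auto
    finally show ?thesis by (simp add: mult_ac)
  qed
  then show ?thesis by blast
qed

lemma lip_add:
  assumes "\<And>x y. norm (F x - F y) \<le> K1 * norm (x - y)" "\<And>x y. norm (G x - G y) \<le> K2 * norm (x - y)"
  shows "\<exists>K. \<forall>x y. norm ((F x + G x) - (F y + G y)) \<le> K * norm (x - y)"
proof -
  have "norm ((F x + G x) - (F y + G y)) \<le> (K1 + K2) * norm (x - y)" for x y
  proof -
    have "norm ((F x + G x) - (F y + G y)) = norm ((F x - F y) + (G x - G y))" by (simp add: algebra_simps)
    also have "\<dots> \<le> norm (F x - F y) + norm (G x - G y)" by (rule norm_triangle_ineq)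
    also have "\<dots> \<le> (K1 + K2) * norm (x - y)" using assms[of x y] by (simp add: distrib_right)
    finally show ?thesis .
  qed
  then show ?thesis by blast
qed

lemma lip_sub:
  assumes "\<And>x y. norm (F x - F y) \<le> K1 * norm (x - y)" "\<And>x y. norm (G x - G y) \<le> K2 * norm (x - y)"
  shows "\<exists>K. \<forall>x y. norm ((F x - G x) - (F y - G y)) \<le> K * norm (x - y)"
proof -
  have "norm ((F x - G x) - (F y - G y)) \<le> (K1 + K2) * norm (x - y)" for x y
  proof -
    have "norm ((F x - G x) - (F y - G y)) = norm ((F x - F y) - (G x - G y))" by (simp add: algebra_simps)
    also have "\<dots> \<le> norm (F x - F y) + norm (G x - G y)" by (rule norm_triangle_ineq4)
    also have "\<dots> \<le> (K1 + K2) * norm (x - y)" using assms[of x y] by (simp add: distrib_right)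
    finally show ?thesis .
  qed
  then show ?thesis by blast
qed

lemma sq_bound:
  assumes "spd M1" "spd M2" "mnorm M2 a \<le> L * mnorm M1 b"
  shows "qf M2 a \<le> L^2 * qf M1 b"
proof -
  have "(mnorm M2 a)^2 \<le> (L * mnorm M1 b)^2"
    using assms(3) mnorm_nonneg[OF assms(2)] by (rule power_mono)
  then show ?thesis using mnorm_sq[OF assms(1)] mnorm_sq[OF assms(2)] by (simp add: power_mult_distrib)
qed

lemma lip_final:
  assumes "spd M1" "spd M2" "\<exists>K. \<forall>x y. norm (F x - F y) \<le> K * norm (x - y)"
  shows "qf M2 (F x - F y) \<le> (lip_const (mnorm M1) (mnorm M2) F)^2 * qf M1 (x - y)"
    and "0 \<le> lip_const (mnorm M1) (mnorm M2) F"
proof -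
  obtain K where K: "\<And>x y. norm (F x - F y) \<le> K * norm (x - y)" using assms(3) by blast
  have ex: "\<exists>L\<ge>0. \<forall>x y. mnorm M2 (F x - F y) \<le> L * mnorm M1 (x - y)"
    by (rule lip_transfer[OF assms(1,2) K])
  have nn: "\<And>x. 0 \<le> mnorm M1 x" using mnorm_nonneg[OF assms(1)] .
  show "0 \<le> lip_const (mnorm M1) (mnorm M2) F" by (rule lip_const_props(2)[OF ex nn])
  show "qf M2 (F x - F y) \<le> (lip_const (mnorm M1) (mnorm M2) F)^2 * qf M1 (x - y)"
    by (rule sq_bound[OF assms(1,2) lip_const_props(1)[OF ex nn]])
qed

lemma step_lemma:
  assumes V: "spd V"
  shows "qf V (x - t *\<^sub>R (matrix_inv V *v g)) = qf V x - 2 * t * (x \<bullet> g) + t^2 * qf (matrix_inv V) g"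
proof -
  have sV: "transpose V = V" using V by (simp add: spd_def)
  have a: "(V *v x) \<bullet> (t *\<^sub>R (matrix_inv V *v g)) = t * (x \<bullet> g)"
    using sym_dot[OF sV, of x "matrix_inv V *v g"] by (simp add: spd_inv_r[OF V] inner_commute)
  have b: "qf V (matrix_inv V *v g) = qf (matrix_inv V) g"
    unfolding qf_def by (simp add: spd_inv_r[OF V] inner_commute)
  show ?thesis unfolding qf_diff[OF sV] a qf_scale b by simp
qed



declare transpose_matrix_vector[simp del]

theorem theorem5p5:
  fixes B :: "real^'m^'n"
    and f :: "real^'m \<Rightarrow> real" and gf :: "real^'m \<Rightarrow> real^'m"
    and h :: "real^'n \<Rightarrow> real" and gh :: "real^'n \<Rightarrow> real^'n"
    and TU IV :: "real^'m^'m" and TP IQ :: "real^'n^'n"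
    and ustar :: "real^'m" and pstar :: "real^'n"
    and mu_f L_f mu_h L_h mu_fB mu_hB :: real
    and u uh :: "nat \<Rightarrow> real^'m" and p ph :: "nat \<Rightarrow> real^'n"
    and alpha :: "nat \<Rightarrow> real" and k :: nat
  assumes dims: "CARD('n) \<le> CARD('m)"
    and rankB: "rank B = CARD('n)"
    and f_conv: "convex_on UNIV f" and h_conv: "convex_on UNIV h"
    and f_grad: "\<And>x. (f has_derivative (\<lambda>d. gf x \<bullet> d)) (at x)"
    and h_grad: "\<And>x. (h has_derivative (\<lambda>d. gh x \<bullet> d)) (at x)"
    and f_C1: "continuous_on UNIV gf" and h_C1: "continuous_on UNIV gh"
    and f_lip: "\<exists>L. \<forall>x y. norm (gf x - gf y) \<le> L * norm (x - y)"
    and h_lip: "\<exists>L. \<forall>x y. norm (gh x - gh y) \<le> L * norm (x - y)"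
    and saddle: "gf ustar + transpose B *v pstar = 0" "B *v ustar - gh pstar = 0"
    and spd: "spd TU" "spd IV" "spd TP" "spd IQ"
    and h_S11: "S11 h gh mu_h L_h TP" and L_h_le: "L_h \<le> 1"
    and f_S11: "S11 f gf mu_f L_f TU" and L_f_le: "L_f \<le> 1"
    and fB_sc: "strongly_convex_wrt
                  (\<lambda>v. f v + 1/2 * (((transpose B ** matrix_inv TP ** B) *v v) \<bullet> v))
                  (\<lambda>v. gf v + (transpose B ** matrix_inv TP ** B) *v v) mu_fB IV"
    and mu_fB_pos: "mu_fB > 0"
    and hB_sc: "strongly_convex_wrt
                  (\<lambda>q. h q + 1/2 * (((B ** matrix_inv TU ** transpose B) *v q) \<bullet> q))
                  (\<lambda>q. gh q + (B ** matrix_inv TU ** transpose B) *v q) mu_hB IQ"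
    and mu_hB_pos: "mu_hB > 0"
    and iter: "\<And>j. uh j = u j - matrix_inv TU *v (gf (u j) + transpose B *v p j)"
              "\<And>j. ph j = p j - matrix_inv TP *v (gh (p j) - B *v u j)"
              "\<And>j. u (Suc j) = u j - alpha j *\<^sub>R (matrix_inv IV *v (gf (u j) + transpose B *v ph j))"
              "\<And>j. p (Suc j) = p j - alpha j *\<^sub>R (matrix_inv IQ *v (gh (p j) - B *v uh j))"
  defines "LV2 \<equiv> 2 * ((lip_const (mnorm IV) (mnorm (matrix_inv IV)) (\<lambda>v. gf v + (transpose B ** matrix_inv TP ** B) *v v))\<^sup>2
                     + lambda_max (matrix_inv IQ ** B ** matrix_inv IV ** transpose B) * (lip_const (mnorm IV) (mnorm IV) (\<lambda>v. v - matrix_inv TU *v gf v))\<^sup>2)"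
    and "LQ2 \<equiv> 2 * ((lip_const (mnorm IQ) (mnorm (matrix_inv IQ)) (\<lambda>q. gh q + (B ** matrix_inv TU ** transpose B) *v q))\<^sup>2
                     + lambda_max (matrix_inv IQ ** B ** matrix_inv IV ** transpose B) * (lip_const (mnorm IQ) (mnorm IQ) (\<lambda>q. q - matrix_inv TP *v gh q))\<^sup>2)"
    and "E \<equiv> (\<lambda>v q. 1/2 * (mnorm IV (v - ustar))\<^sup>2 + 1/2 * (mnorm IQ (q - pstar))\<^sup>2)"
  assumes alpha_pos: "0 < alpha k"
    and alpha_bound: "alpha k < min (mu_fB / LV2) (mu_hB / LQ2)"
  shows "let delta = min (alpha k * (mu_fB - LV2 * alpha k)) (alpha k * (mu_hB - LQ2 * alpha k))
         in 0 < delta \<and> delta < 1 \<and> E (u (Suc k)) (p (Suc k)) \<le> (1 - delta) * E (u k) (p k)"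
proof -
  note defs = assms(29-31)
  let ?Vi = "matrix_inv IV" and ?Qi = "matrix_inv IQ" and ?Ui = "matrix_inv TU" and ?Pi = "matrix_inv TP"
  let ?Bt = "transpose B"
  define FB where "FB = (\<lambda>v. gf v + (transpose B ** matrix_inv TP ** B) *v v)"
  define HB where "HB = (\<lambda>q. gh q + (B ** matrix_inv TU ** transpose B) *v q)"
  define eU where "eU = (\<lambda>v. v - matrix_inv TU *v gf v)"
  define eP where "eP = (\<lambda>q. q - matrix_inv TP *v gh q)"
  define Lfb where "Lfb = lip_const (mnorm IV) (mnorm ?Vi) FB"
  define Lhb where "Lhb = lip_const (mnorm IQ) (mnorm ?Qi) HB"
  define LeU where "LeU = lip_const (mnorm IV) (mnorm IV) eU"
  define LeP where "LeP = lip_const (mnorm IQ) (mnorm IQ) eP"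
  define Lam where "Lam = lambda_max (?Qi ** B ** ?Vi ** ?Bt)"
  have LV2: "LV2 = 2 * (Lfb^2 + Lam * LeU^2)"
    using defs(1) unfolding Lfb_def LeU_def Lam_def FB_def eU_def by simp
  have LQ2: "LQ2 = 2 * (Lhb^2 + Lam * LeP^2)"
    using defs(2) unfolding Lhb_def LeP_def Lam_def HB_def eP_def by simp
  have TU: "spd TU" and V: "spd IV" and TP: "spd TP" and Q: "spd IQ" using spd by auto
  have Vi: "spd ?Vi" and Qi: "spd ?Qi" and Ui: "spd ?Ui" and Pi: "spd ?Pi"
    using spd_inv_spd TU V TP Q by auto
  obtain Kf where Kf: "\<And>x y. norm (gf x - gf y) \<le> Kf * norm (x - y)" using f_lip by blast
  obtain Kh where Kh: "\<And>x y. norm (gh x - gh y) \<le> Kh * norm (x - y)" using h_lip by blast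
  have lipFB: "\<exists>K. \<forall>x y. norm (FB x - FB y) \<le> K * norm (x - y)"
  proof -
    obtain K2 where "\<forall>x y. norm ((transpose B ** ?Pi ** B) *v x - (transpose B ** ?Pi ** B) *v y) \<le> K2 * norm (x - y)"
      using lip_mat by blast
    then show ?thesis unfolding FB_def using lip_add[OF Kf] by blast
  qed
  have lipHB: "\<exists>K. \<forall>x y. norm (HB x - HB y) \<le> K * norm (x - y)"
  proof -
    obtain K2 where "\<forall>x y. norm ((B ** ?Ui ** transpose B) *v x - (B ** ?Ui ** transpose B) *v y) \<le> K2 * norm (x - y)"
      using lip_mat by blast
    then show ?thesis unfolding HB_def using lip_add[OF Kh] by blast
  qed
  have lipeU: "\<exists>K. \<forall>x y. norm (eU x - eU y) \<le> K * norm (x - y)"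
  proof -
    obtain K2 where "\<forall>x y. norm (?Ui *v gf x - ?Ui *v gf y) \<le> K2 * norm (x - y)"
      using lip_mat_comp[OF Kf] by blast
    moreover have "norm (x - y) \<le> 1 * norm (x - y)" for x y :: "real^'m" by simp
    ultimately show ?thesis unfolding eU_def using lip_sub[of "\<lambda>x. x" 1 "\<lambda>x. ?Ui *v gf x" K2] by blast
  qed
  have lipeP: "\<exists>K. \<forall>x y. norm (eP x - eP y) \<le> K * norm (x - y)"
  proof -
    obtain K2 where "\<forall>x y. norm (?Pi *v gh x - ?Pi *v gh y) \<le> K2 * norm (x - y)"
      using lip_mat_comp[OF Kh] by blast
    moreover have "norm (x - y) \<le> 1 * norm (x - y)" for x y :: "real^'n" by simp
    ultimately show ?thesis unfolding eP_def using lip_sub[of "\<lambda>x. x" 1 "\<lambda>x. ?Pi *v gh x" K2] by blast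
  qed
  have I5: "\<And>x y. qf ?Vi (FB x - FB y) \<le> Lfb^2 * qf IV (x - y)" and Lfb0: "0 \<le> Lfb"
    unfolding Lfb_def using lip_final[OF V Vi lipFB] by auto
  have I7: "\<And>x y. qf ?Qi (HB x - HB y) \<le> Lhb^2 * qf IQ (x - y)" and Lhb0: "0 \<le> Lhb"
    unfolding Lhb_def using lip_final[OF Q Qi lipHB] by auto
  have I8: "\<And>x y. qf IV (eU x - eU y) \<le> LeU^2 * qf IV (x - y)"
    unfolding LeU_def using lip_final[OF V V lipeU] by auto
  have I6: "\<And>x y. qf IQ (eP x - eP y) \<le> LeP^2 * qf IQ (x - y)"
    unfolding LeP_def using lip_final[OF Q Q lipeP] by auto
  have Lam0: "0 \<le> Lam" unfolding Lam_def by (rule specA(2)[OF V Q])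
  have I9: "\<And>b. qf ?Vi (?Bt *v b) \<le> Lam * qf IQ b" unfolding Lam_def by (rule specA(1)[OF V Q])
  have I10: "\<And>d. qf ?Qi (B *v d) \<le> Lam * qf IV d" unfolding Lam_def by (rule specB[OF V Q])
  have scF: "\<And>x y. mu_fB * qf IV (x - y) \<le> (FB x - FB y) \<bullet> (x - y)"
    unfolding FB_def by (rule sc_mono[OF fB_sc V])
  have scH: "\<And>x y. mu_hB * qf IQ (x - y) \<le> (HB x - HB y) \<bullet> (x - y)"
    unfolding HB_def by (rule sc_mono[OF hB_sc Q])
  have upf: "\<And>x y. bregman f gf y x \<le> L_f/2 * (mnorm TU (x-y))^2" using f_S11 unfolding S11_def by blast
  have uph: "\<And>x y. bregman h gh y x \<le> L_h/2 * (mnorm TP (x-y))^2" using h_S11 unfolding S11_def by blast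
  have I1: "\<And>x y. qf ?Ui (gf x - gf y) \<le> (gf x - gf y) \<bullet> (x - y)"
    by (rule cocoercive[OF f_conv f_grad TU upf L_f_le])
  have I2: "\<And>x y. qf ?Pi (gh x - gh y) \<le> (gh x - gh y) \<bullet> (x - y)"
    by (rule cocoercive[OF h_conv h_grad TP uph L_h_le])
  have mu_le: "mu_fB^2 \<le> Lfb^2"
  proof -
    define e :: "real^'m" where "e = 1"
    have e0: "e \<noteq> 0" unfolding e_def by (simp add: vec_eq_iff)
    define g where "g = FB (ustar + e) - FB ustar"
    have qe: "qf IV e > 0" by (rule spd_pos[OF V e0])
    have a: "mu_fB * qf IV e \<le> g \<bullet> e" using scF[of "ustar + e" ustar] unfolding g_def by simp
    have b: "(g \<bullet> e)^2 \<le> qf ?Vi g * qf IV e" by (rule cs_gen[OF V])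
    have c: "qf ?Vi g \<le> Lfb^2 * qf IV e" using I5[of "ustar + e" ustar] unfolding g_def by simp
    have "(mu_fB * qf IV e)^2 \<le> (g \<bullet> e)^2"
      using a mu_fB_pos qe by (intro power_mono) auto
    also have "\<dots> \<le> (Lfb^2 * qf IV e) * qf IV e"
      using b c qe by (meson order_trans mult_right_mono less_imp_le)
    finally have "mu_fB^2 * (qf IV e)^2 \<le> Lfb^2 * (qf IV e)^2" by (simp add: power_mult_distrib power2_eq_square mult_ac)
    then show ?thesis using qe by simp
  qed
  have LV2_pos: "LV2 > 0"
  proof (rule ccontr)
    assume "\<not> LV2 > 0"
    then have "mu_fB / LV2 \<le> 0" using mu_fB_pos by (simp add: divide_nonneg_nonpos less_imp_le)
    then show False using alpha_pos alpha_bound by simp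
  qed
  have LQ2_pos: "LQ2 > 0"
  proof (rule ccontr)
    assume "\<not> LQ2 > 0"
    then have "mu_hB / LQ2 \<le> 0" using mu_hB_pos by (simp add: divide_nonneg_nonpos less_imp_le)
    then show False using alpha_pos alpha_bound by simp
  qed
  define al where "al = alpha k"
  have al0: "0 < al" using alpha_pos al_def by simp
  have alV: "al * LV2 < mu_fB" using alpha_bound LV2_pos unfolding al_def by (simp add: less_divide_eq)
  have alQ: "al * LQ2 < mu_hB" using alpha_bound LQ2_pos unfolding al_def by (simp add: less_divide_eq)
  define delta where "delta = min (al * (mu_fB - LV2 * al)) (al * (mu_hB - LQ2 * al))"
  have d0: "0 < delta" unfolding delta_def using al0 alV alQ by (simp add: mult_ac)
  have d1: "delta < 1"
  proof -
    have "0 \<le> Lam * LeU^2" using Lam0 by simp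
    moreover have "LV2 = 2 * Lfb^2 + 2 * (Lam * LeU^2)" using LV2 by simp
    ultimately have "LV2 \<ge> 2 * mu_fB^2" using mu_le by linarith
    then have "al^2 * LV2 \<ge> al^2 * (2 * mu_fB^2)" by (simp add: mult_left_mono)
    moreover have "al * mu_fB - al^2 * (2 * mu_fB^2) < 1"
    proof -
      have "0 \<le> 2 * (al * mu_fB - 1/4)^2" by simp
      then show ?thesis by (simp add: power2_eq_square algebra_simps)
    qed
    moreover have "delta \<le> al * mu_fB - al^2 * LV2" unfolding delta_def by (simp add: power2_eq_square algebra_simps)
    ultimately show ?thesis by linarith
  qed
  define du where "du = u k - ustar"
  define dp where "dp = p k - pstar"
  define X where "X = gf (u k) - gf ustar"
  define Z where "Z = gh (p k) - gh pstar"
  define W where "W = B *v du"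
  define Y where "Y = ?Bt *v dp"
  define a where "a = FB (u k) - FB ustar"
  define b where "b = eP (p k) - eP pstar"
  define c where "c = HB (p k) - HB pstar"
  define d where "d = eU (u k) - eU ustar"
  have a_eq: "a = X + ?Bt *v (?Pi *v W)"
    unfolding a_def FB_def X_def W_def du_def
    by (simp add: matrix_vector_mul_assoc[symmetric] matrix_vector_mult_diff_distrib algebra_simps)
  have c_eq: "c = Z + B *v (?Ui *v Y)"
    unfolding c_def HB_def Z_def Y_def dp_def
    by (simp add: matrix_vector_mul_assoc[symmetric] matrix_vector_mult_diff_distrib algebra_simps)
  have b_eq: "b = dp - ?Pi *v Z"
    unfolding b_def eP_def Z_def dp_def by (simp add: matrix_vector_mult_diff_distrib algebra_simps)
  have d_eq: "d = du - ?Ui *v X"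
    unfolding d_def eU_def X_def du_def by (simp add: matrix_vector_mult_diff_distrib algebra_simps)
  have gu: "gf (u k) + ?Bt *v ph k = a + ?Bt *v b"
  proof -
    have s1: "gf ustar = - (?Bt *v pstar)" using saddle(1) by (simp add: eq_neg_iff_add_eq_0)
    have s2: "gh pstar = B *v ustar" using saddle(2) by simp
    show ?thesis unfolding iter(2) a_def b_def FB_def eP_def s1
      by (simp add: matrix_vector_mul_assoc[symmetric] matrix_vector_mult_diff_distrib
          matrix_vector_right_distrib s2 algebra_simps)
  qed
  have gp: "gh (p k) - B *v uh k = c - B *v d"
  proof -
    have s1: "gf ustar = - (?Bt *v pstar)" using saddle(1) by (simp add: eq_neg_iff_add_eq_0)
    have s2: "gh pstar = B *v ustar" using saddle(2) by simp
    show ?thesis unfolding iter(1) c_def d_def HB_def eU_def s2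
      by (simp add: matrix_vector_mul_assoc[symmetric] matrix_vector_mult_diff_distrib
          matrix_vector_right_distrib s1 mv_neg algebra_simps)
  qed
  have un: "u (Suc k) - ustar = du - al *\<^sub>R (?Vi *v (a + ?Bt *v b))"
    unfolding iter(3) du_def al_def gu by simp
  have pn: "p (Suc k) - pstar = dp - al *\<^sub>R (?Qi *v (c - B *v d))"
    unfolding iter(4) dp_def al_def gp by simp
  define qV where "qV = qf IV du"
  define qQ where "qQ = qf IQ dp"
  have qV0: "0 \<le> qV" unfolding qV_def by (rule spd_nonneg[OF V])
  have qQ0: "0 \<le> qQ" unfolding qQ_def by (rule spd_nonneg[OF Q])
  have E_eq: "E v q = 1/2 * qf IV (v - ustar) + 1/2 * qf IQ (q - pstar)" for v q
    using defs(3) mnorm_sq[OF V] mnorm_sq[OF Q] by simp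
  have En: "2 * E (u (Suc k)) (p (Suc k)) =
      qV - 2 * al * (du \<bullet> (a + ?Bt *v b)) + al^2 * qf ?Vi (a + ?Bt *v b)
    + qQ - 2 * al * (dp \<bullet> (c - B *v d)) + al^2 * qf ?Qi (c - B *v d)"
    unfolding E_eq un pn step_lemma[OF V] step_lemma[OF Q] qV_def qQ_def by (simp add: field_simps)
  have Eo: "2 * E (u k) (p k) = qV + qQ" unfolding E_eq qV_def qQ_def du_def dp_def by simp
  have cross: "a \<bullet> du + c \<bullet> dp \<le> 2 * (du \<bullet> (a + ?Bt *v b)) + 2 * (dp \<bullet> (c - B *v d))"
  proof -
    have sUi: "transpose ?Ui = ?Ui" and sPi: "transpose ?Pi = ?Pi" using Ui Pi by (auto simp: spd_def)
    have e1: "du \<bullet> (?Bt *v b) = W \<bullet> dp - W \<bullet> (?Pi *v Z)"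
    proof -
      have "du \<bullet> (?Bt *v b) = W \<bullet> b" unfolding W_def using adjB[of B du b] by simp
      also have "\<dots> = W \<bullet> dp - W \<bullet> (?Pi *v Z)" unfolding b_eq by (simp add: inner_diff_right)
      finally show ?thesis .
    qed
    have e2: "dp \<bullet> (B *v d) = Y \<bullet> du - Y \<bullet> (?Ui *v X)"
    proof -
      have "dp \<bullet> (B *v d) = Y \<bullet> d" unfolding Y_def using adj[of B dp d] by simp
      also have "\<dots> = Y \<bullet> du - Y \<bullet> (?Ui *v X)" unfolding d_eq by (simp add: inner_diff_right)
      finally show ?thesis .
    qed
    have e3: "W \<bullet> dp = Y \<bullet> du"
    proof -
      have "W \<bullet> dp = du \<bullet> Y" unfolding W_def Y_def using adjB[of B du dp] by simp
      then show ?thesis by (simp add: inner_commute)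
    qed
    have e4: "a \<bullet> du = X \<bullet> du + qf ?Pi W"
    proof -
      have "(?Bt *v (?Pi *v W)) \<bullet> du = (?Pi *v W) \<bullet> W" unfolding W_def by (rule adj)
      then show ?thesis unfolding a_eq qf_def by (simp add: inner_add_left)
    qed
    have e5: "c \<bullet> dp = Z \<bullet> dp + qf ?Ui Y"
    proof -
      have "(B *v (?Ui *v Y)) \<bullet> dp = (?Ui *v Y) \<bullet> Y" unfolding Y_def by (rule adjB)
      then show ?thesis unfolding c_eq qf_def by (simp add: inner_add_left)
    qed
    have c1: "qf ?Ui X \<le> X \<bullet> du" using I1[of "u k" ustar] unfolding X_def du_def .
    have c2: "qf ?Pi Z \<le> Z \<bullet> dp" using I2[of "p k" pstar] unfolding Z_def dp_def .
    have p1: "0 \<le> qf ?Ui (X + Y)" by (rule spd_nonneg[OF Ui])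
    have p2: "0 \<le> qf ?Pi (Z - W)" by (rule spd_nonneg[OF Pi])
    have p1': "qf ?Ui (X + Y) = qf ?Ui X + 2 * (Y \<bullet> (?Ui *v X)) + qf ?Ui Y"
      unfolding qf_add[OF sUi] by (simp add: inner_commute)
    have p2': "qf ?Pi (Z - W) = qf ?Pi Z - 2 * (W \<bullet> (?Pi *v Z)) + qf ?Pi W"
      unfolding qf_diff[OF sPi] by (simp add: inner_commute)
    have "du \<bullet> (a + ?Bt *v b) + dp \<bullet> (c - B *v d) = a \<bullet> du + du \<bullet> (?Bt *v b) + c \<bullet> dp - dp \<bullet> (B *v d)"
      by (simp add: inner_add_right inner_diff_right inner_commute)
    then show ?thesis using e1 e2 e3 e4 e5 c1 c2 p1 p2 p1' p2' by linarith
  qed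
  have sc1: "mu_fB * qV \<le> a \<bullet> du" using scF[of "u k" ustar] unfolding a_def qV_def du_def .
  have sc2: "mu_hB * qQ \<le> c \<bullet> dp" using scH[of "p k" pstar] unfolding c_def qQ_def dp_def .
  define S1 where "S1 = du \<bullet> (a + ?Bt *v b)"
  define S2 where "S2 = dp \<bullet> (c - B *v d)"
  define P1 where "P1 = qf ?Vi (a + ?Bt *v b)"
  define P2 where "P2 = qf ?Qi (c - B *v d)"
  have A1: "P1 \<le> 2 * (Lfb^2 * qV) + 2 * (Lam * (LeP^2 * qQ))"
  proof -
    have "P1 \<le> 2 * qf ?Vi a + 2 * qf ?Vi (?Bt *v b)" unfolding P1_def by (rule parallelogram[OF Vi])
    moreover have "qf ?Vi a \<le> Lfb^2 * qV" unfolding a_def qV_def du_def by (rule I5)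
    moreover have "qf ?Vi (?Bt *v b) \<le> Lam * qf IQ b" by (rule I9)
    moreover have "Lam * qf IQ b \<le> Lam * (LeP^2 * qQ)"
      using I6[of "p k" pstar] Lam0 unfolding b_def qQ_def dp_def by (rule mult_left_mono)
    ultimately show ?thesis by linarith
  qed
  have A2: "P2 \<le> 2 * (Lhb^2 * qQ) + 2 * (Lam * (LeU^2 * qV))"
  proof -
    have "P2 \<le> 2 * qf ?Qi c + 2 * qf ?Qi (- (B *v d))"
      unfolding P2_def using parallelogram[OF Qi, of c "- (B *v d)"] by simp
    moreover have "qf ?Qi (- (B *v d)) = qf ?Qi (B *v d)" by (rule qf_minus)
    moreover have "qf ?Qi c \<le> Lhb^2 * qQ" unfolding c_def qQ_def dp_def by (rule I7)
    moreover have "qf ?Qi (B *v d) \<le> Lam * qf IV d" by (rule I10)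
    moreover have "Lam * qf IV d \<le> Lam * (LeU^2 * qV)"
      using I8[of "u k" ustar] Lam0 unfolding d_def qV_def du_def by (rule mult_left_mono)
    ultimately show ?thesis by linarith
  qed
  have LL: "LV2 * qV + LQ2 * qQ = 2 * (Lfb^2 * qV) + 2 * (Lam * (LeU^2 * qV)) + 2 * (Lhb^2 * qQ) + 2 * (Lam * (LeP^2 * qQ))"
    unfolding LV2 LQ2 by (simp add: algebra_simps)
  have B1: "al^2 * (P1 + P2) \<le> al^2 * (LV2 * qV + LQ2 * qQ)"
  proof (rule mult_left_mono)
    show "P1 + P2 \<le> LV2 * qV + LQ2 * qQ" using A1 A2 LL by linarith
  qed simp
  have B2: "al * (mu_fB * qV + mu_hB * qQ) \<le> al * (2 * S1 + 2 * S2)"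
  proof (rule mult_left_mono)
    show "mu_fB * qV + mu_hB * qQ \<le> 2 * S1 + 2 * S2" using cross sc1 sc2 unfolding S1_def S2_def by linarith
  qed (use al0 in simp)
  have En': "2 * E (u (Suc k)) (p (Suc k)) = qV + qQ - al * (2 * S1 + 2 * S2) + al^2 * (P1 + P2)"
    unfolding En S1_def S2_def P1_def P2_def by (simp add: algebra_simps)
  have R: "qV * (1 - al * (mu_fB - LV2 * al)) + qQ * (1 - al * (mu_hB - LQ2 * al))
      = qV + qQ - al * (mu_fB * qV + mu_hB * qQ) + al^2 * (LV2 * qV + LQ2 * qQ)"
    by (simp add: algebra_simps power2_eq_square)
  have "2 * E (u (Suc k)) (p (Suc k)) \<le> qV * (1 - al * (mu_fB - LV2 * al)) + qQ * (1 - al * (mu_hB - LQ2 * al))"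
    unfolding En' R using B1 B2 by linarith
  also have "\<dots> \<le> qV * (1 - delta) + qQ * (1 - delta)"
  proof -
    have m1: "delta \<le> al * (mu_fB - LV2 * al)" and m2: "delta \<le> al * (mu_hB - LQ2 * al)"
      unfolding delta_def by (rule min.cobounded1, rule min.cobounded2)
    have "qV * (1 - al * (mu_fB - LV2 * al)) \<le> qV * (1 - delta)"
      using qV0 m1 by (intro mult_left_mono) linarith+
    moreover have "qQ * (1 - al * (mu_hB - LQ2 * al)) \<le> qQ * (1 - delta)"
      using qQ0 m2 by (intro mult_left_mono) linarith+
    ultimately show ?thesis by linarith
  qed
  also have "\<dots> = (1 - delta) * (2 * E (u k) (p k))" unfolding Eo by (simp add: algebra_simps)
  finally have fin: "2 * E (u (Suc k)) (p (Suc k)) \<le> (1 - delta) * (2 * E (u k) (p k))" .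
  have "(1 - delta) * (2 * E (u k) (p k)) = 2 * ((1 - delta) * E (u k) (p k))" by (simp only: mult.left_commute)
  then have "E (u (Suc k)) (p (Suc k)) \<le> (1 - delta) * E (u k) (p k)" using fin by linarith
  then show ?thesis using d0 d1 unfolding Let_def al_def[symmetric] delta_def[symmetric] by blast
qed

end
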